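(* Let $d\in\mathbf{N}$. A measure $\mu$ maximizes $E_\infty$ over $\mathcal{P}_{\mathrm{fin}}(\mathbf{S}^d)$ if and only if there is an orthonormal basis $v_1,\dots,v_{d+1}$ of $\mathbf{R}^{d+1}$ such that $\mu\equiv\frac1{d+1}\sum_{i=1}^{d+1}\delta_{v_i}$.
   Context: $\mathbf{S}^d=\{x\in\mathbf{R}^{d+1}:|x|=1\}$. Define $\Lambda^\infty(x,y)=1$ if $x\cdot y=0$ and $0$ otherwise, and for a finite nonnegative Borel measure $\mu$ on $\mathbf{S}^d$, $E_\infty(\mu)=\frac12\iint\Lambda^\infty(x,y)\,d\mu(x)\,d\mu(y)$. $\mathcal{P}_{\mathrm{fin}}(\mathbf{S}^d)$ is the set of Borel probability measures on $\mathbf{S}^d$ with finite support; $\delta_x$ is the Dirac mass at $x$. For finite measures $\mu,\nu$ on $\mathbf{S}^d$, $\mu\equiv\nu$ means there exists an orthogonal matrix $M\in O(d+1)$ such that $\mu(A\cup -A)=\nu(M(A\cup-A))$ for every measurable $A\subseteq\mathbf{S}^d$ (equality up to rotation and identification of antipodal points). *)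

theory Defs
  imports "HOL-Probability.Probability"
begin

text \<open>Points of S^d are unit vectors of real^'n, where CARD('n) = d+1.
  Measures on S^d are represented as Borel measures on real^'n concentrated on the unit sphere.\<close>

definition Lambda_inf :: "real^'n \<Rightarrow> real^'n \<Rightarrow> real" where
  "Lambda_inf x y = (if x \<bullet> y = 0 then 1 else 0)"

definition E_inf :: "(real^'n) measure \<Rightarrow> real" where
  "E_inf \<mu> = (1/2) * (\<integral>x. (\<integral>y. Lambda_inf x y \<partial>\<mu>) \<partial>\<mu>)"

definition P_fin :: "(real^'n) measure set" where
  "P_fin = {\<mu>. sets \<mu> = sets borel \<and> prob_space \<mu> \<and>
      (\<exists>S. finite S \<and> S \<subseteq> sphere 0 1 \<and> emeasure \<mu> (space \<mu> - S) = 0)}"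

text \<open>Equality up to rotation and identification of antipodal points.\<close>
definition meas_equiv :: "(real^'n) measure \<Rightarrow> (real^'n) measure \<Rightarrow> bool" where
  "meas_equiv \<mu> \<nu> \<longleftrightarrow> (\<exists>M::real^'n^'n. orthogonal_matrix M \<and>
     (\<forall>A \<in> sets borel. A \<subseteq> sphere 0 1 \<longrightarrow>
        emeasure \<mu> (A \<union> uminus ` A) = emeasure \<nu> ((\<lambda>x. M *v x) ` (A \<union> uminus ` A))))"

text \<open>The measure (1/(d+1)) \<Sum>i \<delta>_{v i}, as the pushforward of the uniform measure on the index type.\<close>
definition uniform_diracs :: "('n::finite \<Rightarrow> real^'n) \<Rightarrow> (real^'n) measure" where
  "uniform_diracs v = distr (uniform_count_measure (UNIV::'n set)) borel v"

definition orthonormal_basis_fam :: "('n::finite \<Rightarrow> real^'n) \<Rightarrow> bool" where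
  "orthonormal_basis_fam v \<longleftrightarrow> (\<forall>i j. v i \<bullet> v j = (if i = j then 1 else 0))"

definition maximizes_E_inf :: "(real^'n::finite) measure \<Rightarrow> bool" where
  "maximizes_E_inf \<mu> \<longleftrightarrow> \<mu> \<in> P_fin \<and> (\<forall>\<nu>\<in>(P_fin :: (real^'n) measure set). E_inf \<nu> \<le> E_inf \<mu>)"

end

theory Submission imports Defs begin

lemma integral_finite_support:
  fixes f :: "'a::metric_space \<Rightarrow> real"
  assumes sM: "sets M = sets borel" and fm: "finite_measure M" and S: "finite S"
    and null: "emeasure M (space M - S) = 0" and f: "f \<in> borel_measurable borel"
  shows "integral\<^sup>L M f = (\<Sum>x\<in>S. f x * measure M {x})"
proof -
  interpret finite_measure M by fact
  have sp: "space M = UNIV" using sets_eq_imp_space_eq[OF sM] by simp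
  have ae: "AE x in M. x \<in> S"
    proof (rule AE_I'[of "space M - S"])
    have "space M - S \<in> sets M" unfolding sM sp by (intro borel_open open_Diff finite_imp_closed S) simp
    then show "space M - S \<in> null_sets M" using null by blast
  qed auto
  have fM: "f \<in> borel_measurable M" using f measurable_cong_sets[OF sM refl] by blast
  have "integral\<^sup>L M f = integral\<^sup>L M (\<lambda>x. \<Sum>s\<in>S. f s * indicator {s} x)"
  proof (rule integral_cong_AE)
    show "(\<lambda>x. \<Sum>s\<in>S. f s * indicator {s} x) \<in> borel_measurable M"
      by (intro borel_measurable_sum borel_measurable_times borel_measurable_const borel_measurable_indicator) (simp add: sM)
    show "AE x in M. f x = (\<Sum>s\<in>S. f s * indicator {s} x)"
      using ae by eventually_elim (simp add: S indicator_def)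
  qed fact
  also have "\<dots> = (\<Sum>s\<in>S. integral\<^sup>L M (\<lambda>x. f s * indicator {s} x))"
    by (rule Bochner_Integration.integral_sum[where I=S and f="\<lambda>s x. f s * indicator {s} x"]) (auto intro!: integrable_mult_right integrable_real_indicator simp: sM emeasure_finite less_top[symmetric])
  also have "\<dots> = (\<Sum>x\<in>S. f x * measure M {x})"
    by (intro sum.cong refl) (simp add: sM)
  finally show ?thesis .
qed

lemma Lambda_meas: "(\<lambda>y. Lambda_inf x y) \<in> borel_measurable borel"
  unfolding Lambda_inf_def by measurable

lemma Pfin_repr:
  fixes \<mu> :: "(real^'n::finite) measure"
  assumes "\<mu> \<in> P_fin"
  obtains S where "finite S" "S \<subseteq> sphere 0 1"
   "\<And>x. x \<notin> S \<Longrightarrow> measure \<mu> {x} = 0"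
   "\<And>x. measure \<mu> {x} \<ge> 0"
   "(\<Sum>x\<in>S. measure \<mu> {x}) = 1"
   "\<And>B. B \<in> sets borel \<Longrightarrow> measure \<mu> B = (\<Sum>x\<in>S. indicator B x * measure \<mu> {x})"
   "E_inf \<mu> = 1/2 * (\<Sum>x\<in>S. \<Sum>y\<in>S. Lambda_inf x y * measure \<mu> {x} * measure \<mu> {y})"
proof -
  from assms obtain S where sM: "sets \<mu> = sets borel" and ps: "prob_space \<mu>" and S: "finite S"
    "S \<subseteq> sphere 0 1" and null: "emeasure \<mu> (space \<mu> - S) = 0"
    unfolding P_fin_def by blast
  interpret prob_space \<mu> by fact
  have fm: "finite_measure \<mu>" by (rule finite_measure_axioms)
  have sp: "space \<mu> = UNIV" using sets_eq_imp_space_eq[OF sM] by simp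
  have Sc: "space \<mu> - S \<in> sets \<mu>" unfolding sM sp by (intro borel_open open_Diff finite_imp_closed S) simp
  have z: "measure \<mu> {x} = 0" if "x \<notin> S" for x
  proof -
    have "measure \<mu> {x} \<le> measure \<mu> (space \<mu> - S)"
      using that Sc by (intro finite_measure_mono) (auto simp: sp)
    also have "\<dots> = 0" using null by (simp add: measure_def)
    finally show ?thesis using measure_nonneg[of \<mu> "{x}"] by linarith
  qed
  have ind: "measure \<mu> B = (\<Sum>x\<in>S. indicator B x * measure \<mu> {x})" if B: "B \<in> sets borel" for B
  proof -
    have "measure \<mu> B = integral\<^sup>L \<mu> (indicator B)"
      using B by (simp add: sM)
    also have "\<dots> = (\<Sum>x\<in>S. indicator B x * measure \<mu> {x})"
      by (rule integral_finite_support[OF sM fm S(1) null]) (use B in simp)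
    finally show ?thesis .
  qed
  have one: "(\<Sum>x\<in>S. measure \<mu> {x}) = 1"
    using ind[of UNIV] prob_space sp by simp
  have inner: "(\<integral>y. Lambda_inf x y \<partial>\<mu>) = (\<Sum>y\<in>S. Lambda_inf x y * measure \<mu> {y})" for x
    by (rule integral_finite_support[OF sM fm S(1) null Lambda_meas])
  have "E_inf \<mu> = 1/2 * (\<integral>x. (\<Sum>y\<in>S. Lambda_inf x y * measure \<mu> {y}) \<partial>\<mu>)"
    unfolding E_inf_def inner ..
  also have "(\<integral>x. (\<Sum>y\<in>S. Lambda_inf x y * measure \<mu> {y}) \<partial>\<mu>) =
      (\<Sum>x\<in>S. (\<Sum>y\<in>S. Lambda_inf x y * measure \<mu> {y}) * measure \<mu> {x})"
  proof (rule integral_finite_support[OF sM fm S(1) null])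
    show "(\<lambda>x. \<Sum>y\<in>S. Lambda_inf x y * measure \<mu> {y}) \<in> borel_measurable borel"
      unfolding Lambda_inf_def by measurable
  qed
  also have "\<dots> = (\<Sum>x\<in>S. \<Sum>y\<in>S. Lambda_inf x y * measure \<mu> {x} * measure \<mu> {y})"
    by (simp add: sum_distrib_left sum_distrib_right mult_ac)
  finally have E: "E_inf \<mu> = 1/2 * (\<Sum>x\<in>S. \<Sum>y\<in>S. Lambda_inf x y * measure \<mu> {x} * measure \<mu> {y})" .
  show ?thesis by (rule that[OF S z _ one ind E]) auto
qed

lemma quad_G:
  fixes S :: "(real^'n::finite) set" and w :: "real^'n \<Rightarrow> real" and y :: "real^'n"
  shows "(\<Sum>x\<in>S. w x * (x \<bullet> y)^2) = (\<Sum>i\<in>UNIV. \<Sum>j\<in>UNIV. y$i * y$j * (\<Sum>x\<in>S. w x * x$i * x$j))"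
proof -
  have "(\<Sum>x\<in>S. w x * (x \<bullet> y)^2) = (\<Sum>x\<in>S. \<Sum>i\<in>UNIV. \<Sum>j\<in>UNIV. y$i * y$j * (w x * x$i * x$j))"
    by (intro sum.cong refl) (simp add: inner_vec_def power2_eq_square sum_product sum_distrib_left mult_ac)
  also have "\<dots> = (\<Sum>i\<in>UNIV. \<Sum>j\<in>UNIV. y$i * y$j * (\<Sum>x\<in>S. w x * x$i * x$j))"
    by (subst sum.swap, subst sum.swap) (simp add: sum_distrib_left sum.swap[of _ S])
  finally show ?thesis .
qed

lemma core_bound:
  fixes S :: "(real^'n::finite) set" and w :: "real^'n \<Rightarrow> real"
  assumes S: "finite S" "S \<subseteq> sphere 0 1" and w: "\<And>x. w x \<ge> 0" and one: "(\<Sum>x\<in>S. w x) = 1"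
  defines "Q \<equiv> (\<Sum>x\<in>S. \<Sum>y\<in>S. Lambda_inf x y * w x * w y)"
  shows "Q \<le> 1 - 1 / CARD('n)"
  and "Q = 1 - 1 / CARD('n) \<Longrightarrow> x\<in>S \<Longrightarrow> y\<in>S \<Longrightarrow> w x > 0 \<Longrightarrow> w y > 0 \<Longrightarrow> x \<bullet> y \<noteq> 0 \<Longrightarrow> (x \<bullet> y)^2 = 1"
  and "Q = 1 - 1 / CARD('n) \<Longrightarrow> (\<Sum>x\<in>S. w x * (x \<bullet> y)^2) = (y \<bullet> y) / CARD('n)"
proof -
  define n where "n = real CARD('n)"
  have n0: "n > 0" unfolding n_def by simp
  define G where "G i j = (\<Sum>x\<in>S. w x * x$i * x$j)" for i j
  define D where "D = (\<Sum>x\<in>S. \<Sum>y\<in>S. (1 - Lambda_inf x y) * w x * w y)"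
  define P where "P = (\<Sum>x\<in>S. \<Sum>y\<in>S. (x \<bullet> y)^2 * w x * w y)"
  define Dg where "Dg = (\<Sum>i\<in>UNIV. (G i i)^2)"
  have unit: "x \<bullet> x = 1" if "x \<in> S" for x
    using that S(2) power2_norm_eq_inner[of x] by auto
  have QD: "Q + D = 1"
  proof -
    have "Q + D = (\<Sum>x\<in>S. \<Sum>y\<in>S. w x * w y)"
      unfolding Q_def D_def by (simp add: sum.distrib[symmetric] algebra_simps)
    also have "\<dots> = (\<Sum>x\<in>S. w x) * (\<Sum>y\<in>S. w y)" by (simp add: sum_product)
    finally show ?thesis using one by simp
  qed
  have term_le: "(x \<bullet> y)^2 \<le> 1 - Lambda_inf x y" if "x \<in> S" "y \<in> S" for x y
  proof -
    have "\<bar>x \<bullet> y\<bar> \<le> norm x * norm y" by (rule Cauchy_Schwarz_ineq2)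
    also have "\<dots> = 1" using that S(2) by (metis mem_sphere_0 mult_1 subsetD)
    finally have "(x \<bullet> y)^2 \<le> 1" by (simp add: abs_square_le_1)
    then show ?thesis by (simp add: Lambda_inf_def)
  qed
  have PD: "P \<le> D"
    unfolding P_def D_def
    by (intro sum_mono mult_right_mono mult_left_mono term_le w) (auto intro: w)
  have PG: "P = (\<Sum>i\<in>UNIV. \<Sum>j\<in>UNIV. (G i j)^2)"
  proof -
    have "P = (\<Sum>y\<in>S. w y * (\<Sum>x\<in>S. w x * (x \<bullet> y)^2))"
      unfolding P_def by (subst sum.swap) (simp add: sum_distrib_left mult_ac)
    also have "\<dots> = (\<Sum>y\<in>S. w y * (\<Sum>i\<in>UNIV. \<Sum>j\<in>UNIV. y$i * y$j * G i j))"
      unfolding quad_G G_def ..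
    also have "\<dots> = (\<Sum>y\<in>S. \<Sum>i\<in>UNIV. \<Sum>j\<in>UNIV. G i j * (w y * y$i * y$j))"
      by (simp add: sum_distrib_left mult_ac)
    also have "\<dots> = (\<Sum>i\<in>UNIV. \<Sum>y\<in>S. \<Sum>j\<in>UNIV. G i j * (w y * y$i * y$j))"
      by (rule sum.swap)
    also have "\<dots> = (\<Sum>i\<in>UNIV. \<Sum>j\<in>UNIV. \<Sum>y\<in>S. G i j * (w y * y$i * y$j))"
      by (intro sum.cong refl, rule sum.swap)
    also have "\<dots> = (\<Sum>i\<in>UNIV. \<Sum>j\<in>UNIV. G i j * G i j)"
      by (intro sum.cong refl) (simp add: sum_distrib_left[symmetric] G_def)
    finally show ?thesis by (simp add: power2_eq_square)
  qed
  have rowle: "(G i i)^2 \<le> (\<Sum>j\<in>UNIV. (G i j)^2)" for i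
    by (rule member_le_sum) auto
  have GDg: "Dg \<le> P" unfolding PG Dg_def by (intro sum_mono rowle)
  have trace: "(\<Sum>i\<in>UNIV. G i i) = 1"
  proof -
    have "(\<Sum>i\<in>UNIV. G i i) = (\<Sum>x\<in>S. w x * (x \<bullet> x))"
      unfolding G_def by (subst sum.swap) (simp add: inner_vec_def sum_distrib_left power2_eq_square mult_ac)
    also have "\<dots> = (\<Sum>x\<in>S. w x)" by (intro sum.cong refl) (simp add: unit)
    finally show ?thesis using one by simp
  qed
  have var: "(\<Sum>i\<in>UNIV. (G i i - 1/n)^2) = Dg - 1/n"
  proof -
    have "(\<Sum>i\<in>UNIV. (G i i - 1/n)^2) = (\<Sum>i\<in>UNIV. (G i i)^2 - 2/n * G i i + 1/n^2)"
      by (intro sum.cong refl) (simp add: power2_eq_square algebra_simps)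
    also have "\<dots> = Dg - 2/n * (\<Sum>i\<in>UNIV. G i i) + n * (1/n^2)"
      unfolding Dg_def by (simp add: sum.distrib sum_subtractf sum_distrib_left n_def)
    also have "\<dots> = Dg - 1/n" using n0 trace by (simp add: power2_eq_square field_simps)
    finally show ?thesis .
  qed
  have Dgn: "Dg \<ge> 1/n" using var sum_nonneg[of UNIV "\<lambda>i. (G i i - 1/n)^2"] by simp
  show "Q \<le> 1 - 1 / CARD('n)" using QD PD GDg Dgn unfolding n_def by linarith
  assume eq: "Q = 1 - 1 / CARD('n)"
  then have Deq: "D = 1/n" using QD unfolding n_def by simp
  have DP: "D = P" and PDg: "P = Dg" and Dg1: "Dg = 1/n" using Deq PD GDg Dgn by linarith+
  {
    assume xy: "x\<in>S" "y\<in>S" "w x > 0" "w y > 0" "x \<bullet> y \<noteq> 0"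
    have "(\<Sum>x\<in>S. \<Sum>y\<in>S. ((1 - Lambda_inf x y) - (x \<bullet> y)^2) * w x * w y) = D - P"
      unfolding D_def P_def by (simp add: sum_subtractf[symmetric] algebra_simps)
    then have z: "(\<Sum>x\<in>S. \<Sum>y\<in>S. ((1 - Lambda_inf x y) - (x \<bullet> y)^2) * w x * w y) = 0"
      using DP by simp
    have tnn: "\<And>x y. x \<in> S \<Longrightarrow> y \<in> S \<Longrightarrow> 0 \<le> ((1 - Lambda_inf x y) - (x \<bullet> y)^2) * w x * w y"
      using term_le w by (simp add: mult_nonneg_nonneg)
    have "(\<Sum>y\<in>S. ((1 - Lambda_inf x y) - (x \<bullet> y)^2) * w x * w y) = 0"
      using z S(1) xy(1) tnn by (subst (asm) sum_nonneg_eq_0_iff) (auto intro!: sum_nonneg)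
    then have "((1 - Lambda_inf x y) - (x \<bullet> y)^2) * w x * w y = 0"
      using S(1) xy(2) tnn[OF xy(1)] by (subst (asm) sum_nonneg_eq_0_iff) auto
    then show "(x \<bullet> y)^2 = 1" using xy by (simp add: Lambda_inf_def)
  }
  have offd: "G i j = 0" if "i \<noteq> j" for i j
  proof -
    have "(\<Sum>i\<in>UNIV. (\<Sum>j\<in>UNIV. (G i j)^2) - (G i i)^2) = 0"
      using PDg unfolding PG Dg_def by (simp add: sum_subtractf)
    then have "(\<Sum>j\<in>UNIV. (G i j)^2) - (G i i)^2 = 0"
      using rowle by (subst (asm) sum_nonneg_eq_0_iff) auto
    then have "(\<Sum>j\<in>UNIV - {i}. (G i j)^2) = 0"
      by (simp add: sum.remove[of UNIV i])
    then show ?thesis using that by (subst (asm) sum_nonneg_eq_0_iff) auto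
  qed
  have diag: "G i i = 1/n" for i
  proof -
    have "(\<Sum>i\<in>UNIV. (G i i - 1/n)^2) = 0" using var Dg1 by simp
    then show ?thesis by (subst (asm) sum_nonneg_eq_0_iff) auto
  qed
  have "(\<Sum>x\<in>S. w x * (x \<bullet> y)^2) = (\<Sum>i\<in>UNIV. \<Sum>j\<in>UNIV. y$i * y$j * G i j)"
    unfolding quad_G G_def ..
  also have "\<dots> = (\<Sum>i\<in>UNIV. y$i * y$i * (1/n))"
  proof (intro sum.cong refl)
    fix i
    have "(\<Sum>j\<in>UNIV. y$i * y$j * G i j) = y$i * y$i * G i i + (\<Sum>j\<in>UNIV-{i}. y$i * y$j * G i j)"
      by (simp add: sum.remove[of UNIV i])
    also have "(\<Sum>j\<in>UNIV-{i}. y$i * y$j * G i j) = 0" by (intro sum.neutral) (auto simp: offd)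
    finally show "(\<Sum>j\<in>UNIV. y$i * y$j * G i j) = y$i * y$i * (1/n)" by (simp add: diag)
  qed
  also have "\<dots> = (y \<bullet> y) / CARD('n)"
    by (simp add: inner_vec_def sum_divide_distrib n_def)
  finally show "(\<Sum>x\<in>S. w x * (x \<bullet> y)^2) = (y \<bullet> y) / CARD('n)" .
qed

lemma v_meas: "(v::'n::finite \<Rightarrow> real^'n) \<in> measurable (uniform_count_measure UNIV) borel"
  by (simp add: measurable_def sets_uniform_count_measure space_uniform_count_measure)

lemma ud_emeasure:
  fixes v :: "'n::finite \<Rightarrow> real^'n"
  shows "emeasure (uniform_diracs v) B = (if B \<in> sets borel then card (v -` B) / CARD('n) else 0)"
proof (cases "B \<in> sets borel")
  case True
  then show ?thesis unfolding uniform_diracs_def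
    by (simp add: emeasure_distr[OF v_meas True] space_uniform_count_measure emeasure_uniform_count_measure)
next
  case False
  then show ?thesis unfolding uniform_diracs_def by (simp add: emeasure_notin_sets)
qed

lemma ud_prob: "prob_space (uniform_diracs (v::'n::finite \<Rightarrow> real^'n))"
  unfolding uniform_diracs_def
  by (intro prob_space.prob_space_distr prob_space_uniform_count_measure v_meas) auto

lemma ud_sets: "sets (uniform_diracs (v::'n::finite \<Rightarrow> real^'n)) = sets borel"
  unfolding uniform_diracs_def by simp

lemma ud_measure:
  fixes v :: "'n::finite \<Rightarrow> real^'n"
  assumes "B \<in> sets borel"
  shows "measure (uniform_diracs v) B = card (v -` B) / CARD('n)"
  using assms by (simp add: measure_def ud_emeasure)

lemma onb_unit: "orthonormal_basis_fam v \<Longrightarrow> norm (v i) = 1"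
  unfolding orthonormal_basis_fam_def by (simp add: norm_eq_1)

lemma ud_Pfin:
  fixes v :: "'n::finite \<Rightarrow> real^'n"
  assumes "orthonormal_basis_fam v"
  shows "uniform_diracs v \<in> P_fin"
  unfolding P_fin_def
proof (intro CollectI conjI exI[of _ "range v"] ud_sets ud_prob)
  show "finite (range v)" by simp
  show "range v \<subseteq> sphere 0 1" using onb_unit[OF assms] by auto
  have "space (uniform_diracs v) - range v \<in> sets borel"
    by (simp add: uniform_diracs_def borel_open open_Diff finite_imp_closed)
  then show "emeasure (uniform_diracs v) (space (uniform_diracs v) - range v) = 0"
    by (auto simp: ud_emeasure)
qed

lemma L_pair:
  fixes w f :: "'a \<Rightarrow> real"
  assumes S: "finite S" and wz: "\<And>x. x \<notin> S \<Longrightarrow> w x = 0" and ab: "a \<noteq> b"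
    and f0: "\<And>x. x \<in> S \<Longrightarrow> w x \<noteq> 0 \<Longrightarrow> x \<noteq> a \<Longrightarrow> x \<noteq> b \<Longrightarrow> f x = 0"
    and fa: "f a = 1" and fb: "f b = 1"
  shows "(\<Sum>x\<in>S. f x * w x) = w a + w b"
proof -
  have "(\<Sum>x\<in>S. f x * w x) = (\<Sum>x\<in>S \<union> {a,b}. f x * w x)"
    by (rule sum.mono_neutral_left) (auto simp: S wz)
  also have "\<dots> = (\<Sum>x\<in>{a,b}. f x * w x) + (\<Sum>x\<in>(S \<union> {a,b}) - {a,b}. f x * w x)"
    by (subst sum.subset_diff[of "{a,b}"]) (auto simp: S)
  also have "(\<Sum>x\<in>(S \<union> {a,b}) - {a,b}. f x * w x) = 0"
    by (rule sum.neutral) (use f0 in force)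
  finally show ?thesis using ab fa fb by simp
qed

lemma unit_sq:
  fixes x y :: "real^'n::finite"
  assumes "norm x = 1" "norm y = 1" "(x \<bullet> y)^2 = 1"
  shows "y = x \<or> y = -x"
proof -
  have xx: "x \<bullet> x = 1" "y \<bullet> y = 1" using assms by (simp_all add: norm_eq_1)
  have "x \<bullet> y = 1 \<or> x \<bullet> y = -1" using assms(3) by (simp add: power2_eq_1_iff)
  then show ?thesis
  proof
    assume "x \<bullet> y = 1"
    then have "(x - y) \<bullet> (x - y) = 0" using xx by (simp add: inner_diff inner_commute)
    then show ?thesis by simp
  next
    assume "x \<bullet> y = -1"
    then have "(x + y) \<bullet> (x + y) = 0" using xx by (simp add: inner_add inner_commute)
    then have "x + y = 0" by simp
    then show ?thesis by (simp add: add_eq_0_iff2)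
  qed
qed

lemma QD_lemma:
  fixes w :: "real^'n::finite \<Rightarrow> real"
  assumes "(\<Sum>x\<in>S. w x) = 1"
  shows "(\<Sum>x\<in>S. \<Sum>y\<in>S. Lambda_inf x y * w x * w y) = 1 - (\<Sum>x\<in>S. w x * (\<Sum>y\<in>S. (1 - Lambda_inf x y) * w y))"
proof -
  have "(\<Sum>x\<in>S. \<Sum>y\<in>S. Lambda_inf x y * w x * w y) + (\<Sum>x\<in>S. w x * (\<Sum>y\<in>S. (1 - Lambda_inf x y) * w y))
      = (\<Sum>x\<in>S. \<Sum>y\<in>S. w x * w y)"
    by (simp add: sum.distrib[symmetric] sum_distrib_left algebra_simps)
  also have "\<dots> = (\<Sum>x\<in>S. w x) * (\<Sum>y\<in>S. w y)" by (simp add: sum_product)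
  finally show ?thesis using assms by simp
qed

lemma neg_ne:
  fixes x :: "real^'n::finite"
  assumes "norm x = 1" shows "x \<noteq> - x"
proof
  assume "x = - x"
  then have "x + x = 0" by (metis add.right_inverse)
  then have "(2::real) *\<^sub>R x = 0" by (simp add: scaleR_2)
  then have "x = 0" by simp
  then show False using assms by simp
qed

lemma onb_inner: "orthonormal_basis_fam v \<Longrightarrow> v i \<bullet> v j = (if i = j then 1 else 0)"
  unfolding orthonormal_basis_fam_def by blast

lemma onb_lines:
  fixes v :: "'n::finite \<Rightarrow> real^'n"
  assumes "orthonormal_basis_fam v"
  shows "v j = v i \<longleftrightarrow> j = i" and "v j \<noteq> - v i"
proof -
  have ii: "v i \<bullet> v i = 1" using onb_inner[OF assms] by simp
  show "v j = v i \<longleftrightarrow> j = i"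
    using onb_inner[OF assms, of j i] ii by (auto split: if_splits)
  show "v j \<noteq> - v i"
  proof
    assume "v j = - v i"
    then have "v j \<bullet> v i = -1" using ii by simp
    then show False using onb_inner[OF assms, of j i] by (simp split: if_splits)
  qed
qed

lemma equiv_value:
  fixes \<mu> :: "(real^'n::finite) measure" and v :: "'n \<Rightarrow> real^'n"
  assumes P: "\<mu> \<in> P_fin" and onb: "orthonormal_basis_fam v" and eqv: "meas_equiv \<mu> (uniform_diracs v)"
  shows "E_inf \<mu> = (1 - 1 / CARD('n)) / 2"
proof -
  define n where "n = real CARD('n)"
  have n0: "n > 0" unfolding n_def by simp
  obtain M :: "real^'n^'n" where orth: "orthogonal_matrix M" and
    H: "\<And>A. A \<in> sets borel \<Longrightarrow> A \<subseteq> sphere 0 1 \<Longrightarrow>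
        emeasure \<mu> (A \<union> uminus ` A) = emeasure (uniform_diracs v) ((\<lambda>x. M *v x) ` (A \<union> uminus ` A))"
    using eqv unfolding meas_equiv_def by blast
  obtain S where S: "finite S" "S \<subseteq> sphere 0 1"
   and wz: "\<And>x. x \<notin> S \<Longrightarrow> measure \<mu> {x} = 0"
   and wnn: "\<And>x. measure \<mu> {x} \<ge> 0"
   and one: "(\<Sum>x\<in>S. measure \<mu> {x}) = 1"
   and ind: "\<And>B. B \<in> sets borel \<Longrightarrow> measure \<mu> B = (\<Sum>x\<in>S. indicator B x * measure \<mu> {x})"
   and E: "E_inf \<mu> = 1/2 * (\<Sum>x\<in>S. \<Sum>y\<in>S. Lambda_inf x y * measure \<mu> {x} * measure \<mu> {y})"
    by (rule Pfin_repr[OF P]) blast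
  define w where "w x = measure \<mu> {x}" for x
  define u where "u i = transpose M *v v i" for i
  have Mu: "M *v u i = v i" for i
    using orth unfolding u_def matrix_vector_mul_assoc orthogonal_matrix_def by simp
  have Minj: "a = b" if "M *v a = M *v b" for a b
  proof -
    have "(transpose M ** M) *v a = (transpose M ** M) *v b"
      unfolding matrix_vector_mul_assoc[symmetric] using that by (rule arg_cong)
    then show ?thesis using orth unfolding orthogonal_matrix_def by simp
  qed
  have Mneg: "M *v (- x) = - (M *v x)" for x
    using matrix_vector_mult_diff_distrib[of M 0 x] by simp
  have otT: "orthogonal_transformation (\<lambda>x. transpose M *v x)"
    unfolding orthogonal_transformation_matrix matrix_of_matrix_vector_mul
    using orth matrix_vector_mul_linear[of "transpose M"] by simp
  have uinner: "u i \<bullet> u j = (if i = j then 1 else 0)" for i j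
  proof -
    have "(transpose M *v v i) \<bullet> (transpose M *v v j) = v i \<bullet> v j"
      using otT unfolding orthogonal_transformation_def by blast
    then show ?thesis unfolding u_def onb_inner[OF onb] .
  qed
  have unorm: "norm (u i) = 1" for i using uinner[of i i] by (simp add: norm_eq_1)
  have uneg: "u i \<noteq> - u i" for i using unorm[of i] by (rule neg_ne)
  define A0 where "A0 = sphere (0::real^'n) 1 - (range u \<union> uminus ` range u)"
  have A0b: "A0 \<in> sets borel" unfolding A0_def
    by (intro sets.Diff borel_closed closed_sphere finite_imp_closed) auto
  have A0s: "A0 \<union> uminus ` A0 = A0"
  proof -
    have "uminus ` A0 \<subseteq> A0" unfolding A0_def by (auto simp: image_iff) (metis minus_minus)+
    then show ?thesis by blast
  qed
  have "emeasure \<mu> A0 = emeasure (uniform_diracs v) ((\<lambda>x. M *v x) ` A0)"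
    using H[OF A0b] A0s unfolding A0_def by auto
  also have "\<dots> = 0"
  proof -
    have "v -` ((\<lambda>x. M *v x) ` A0) = {}"
    proof safe
      fix i a assume "v i = M *v a" "a \<in> A0"
      then have "a = u i" using Minj Mu by metis
      then show "i \<in> {}" using \<open>a \<in> A0\<close> unfolding A0_def by auto
    qed
    then show ?thesis by (simp add: ud_emeasure)
  qed
  finally have "measure \<mu> A0 = 0" by (simp add: measure_def)
  then have A0z: "(\<Sum>x\<in>S. indicator A0 x * w x) = 0" using ind[OF A0b] unfolding w_def by simp
  have supp: "\<exists>i. x = u i \<or> x = - u i" if "x \<in> S" "w x \<noteq> 0" for x
  proof (rule ccontr)
    assume "\<not> ?thesis"
    then have "x \<in> A0" using that S(2) unfolding A0_def by auto
    then have "indicator A0 x * w x \<le> (\<Sum>x\<in>S. indicator A0 x * w x)"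
      using that S(1) wnn unfolding w_def by (intro member_le_sum) auto
    then have "w x \<le> 0" using A0z \<open>x \<in> A0\<close> by simp
    then show False using wnn[of x] that(2) unfolding w_def by simp
  qed
  have W: "w (u i) + w (- u i) = 1/n" for i
  proof -
    have Ab: "{u i} \<in> sets borel" by simp
    have As: "{u i} \<subseteq> sphere 0 1" using unorm by simp
    have e1: "{u i} \<union> uminus ` {u i} = {u i, - u i}" by auto
    have e2: "(\<lambda>x. M *v x) ` {u i, - u i} = {v i, - v i}" by (simp add: Mneg Mu)
    have pre: "v -` {v i, - v i} = {i}" using onb_lines[OF onb] by auto
    have "emeasure \<mu> {u i, - u i} = 1 / n"
      using H[OF Ab As] unfolding e1 e2 by (simp add: ud_emeasure pre n_def)
    then have "measure \<mu> {u i, - u i} = 1/n" using n0 by (simp add: measure_def)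
    moreover have "measure \<mu> {u i, - u i} = w (u i) + w (- u i)"
      unfolding ind[of "{u i, - u i}", simplified] w_def
      by (rule L_pair[OF S(1) wz uneg]) auto
    ultimately show ?thesis by simp
  qed
  have inner0: "(\<Sum>y\<in>S. (1 - Lambda_inf x y) * w y) = 1/n" if xS: "x \<in> S" and wx: "w x \<noteq> 0" for x
  proof -
    obtain i where xi: "x = u i \<or> x = - u i" using supp[OF xS wx] by blast
    have xx: "x \<bullet> x = 1" using xi unorm[of i] by (auto simp: norm_eq_1)
    have "(\<Sum>y\<in>S. (1 - Lambda_inf x y) * w y) = w x + w (- x)"
    proof (rule L_pair[OF S(1)])
      show "\<And>y. y \<notin> S \<Longrightarrow> w y = 0" using wz unfolding w_def by simp
      show "x \<noteq> - x" using xi uneg by auto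
      show "1 - Lambda_inf x x = 1" using xx by (simp add: Lambda_inf_def)
      show "1 - Lambda_inf x (- x) = 1" using xx by (simp add: Lambda_inf_def)
      fix y assume y: "y \<in> S" "w y \<noteq> 0" "y \<noteq> x" "y \<noteq> - x"
      obtain j where yj: "y = u j \<or> y = - u j" using supp y by blast
      have "i \<noteq> j" using xi yj y by auto
      then have "x \<bullet> y = 0" using xi yj uinner[of i j] by auto
      then show "1 - Lambda_inf x y = 0" by (simp add: Lambda_inf_def)
    qed
    also have "\<dots> = 1/n" using xi W[of i] by auto
    finally show ?thesis .
  qed
  have "(\<Sum>x\<in>S. w x * (\<Sum>y\<in>S. (1 - Lambda_inf x y) * w y)) = (\<Sum>x\<in>S. w x * (1/n))"
    by (intro sum.cong refl) (metis inner0 mult_zero_left)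
  also have "\<dots> = 1/n" using one unfolding w_def by (simp add: sum_divide_distrib[symmetric])
  finally have D: "(\<Sum>x\<in>S. w x * (\<Sum>y\<in>S. (1 - Lambda_inf x y) * w y)) = 1/n" .
  show ?thesis
    using E QD_lemma[of w S] one D unfolding w_def n_def by simp
qed

lemma upper:
  fixes \<nu> :: "(real^'n::finite) measure"
  assumes P: "\<nu> \<in> P_fin"
  shows "E_inf \<nu> \<le> (1 - 1 / CARD('n)) / 2"
proof -
  obtain S where S: "finite S" "S \<subseteq> sphere 0 1"
   and wz: "\<And>x. x \<notin> S \<Longrightarrow> measure \<nu> {x} = 0"
   and wnn: "\<And>x. measure \<nu> {x} \<ge> 0"
   and one: "(\<Sum>x\<in>S. measure \<nu> {x}) = 1"
   and ind: "\<And>B. B \<in> sets borel \<Longrightarrow> measure \<nu> B = (\<Sum>x\<in>S. indicator B x * measure \<nu> {x})"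
   and E: "E_inf \<nu> = 1/2 * (\<Sum>x\<in>S. \<Sum>y\<in>S. Lambda_inf x y * measure \<nu> {x} * measure \<nu> {y})"
    by (rule Pfin_repr[OF P]) blast
  show ?thesis using core_bound(1)[OF S wnn one] E by simp
qed

lemma axis_onb: "orthonormal_basis_fam (\<lambda>i::'n::finite. (axis i (1::real) :: real^'n))"
  unfolding orthonormal_basis_fam_def by (simp add: inner_axis_axis)

lemma meas_equiv_refl: "meas_equiv \<nu> \<nu>"
  unfolding meas_equiv_def by (intro exI[of _ "mat 1"]) (simp add: orthogonal_matrix_id)

theorem theorem3p2:
  fixes \<mu> :: "(real^'n::finite) measure"
  assumes "\<mu> \<in> P_fin"
  shows "maximizes_E_inf \<mu> \<longleftrightarrow>
    (\<exists>v::'n \<Rightarrow> real^'n. orthonormal_basis_fam v \<and> meas_equiv \<mu> (uniform_diracs v))"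
proof
  assume "\<exists>v::'n \<Rightarrow> real^'n. orthonormal_basis_fam v \<and> meas_equiv \<mu> (uniform_diracs v)"
  then obtain v :: "'n \<Rightarrow> real^'n" where onb: "orthonormal_basis_fam v" and eqv: "meas_equiv \<mu> (uniform_diracs v)"
    by blast
  have Em: "E_inf \<mu> = (1 - 1 / CARD('n)) / 2" by (rule equiv_value[OF assms onb eqv])
  show "maximizes_E_inf \<mu>"
    unfolding maximizes_E_inf_def
  proof (intro conjI ballI assms)
    fix \<nu> :: "(real^'n) measure" assume "\<nu> \<in> P_fin"
    then show "E_inf \<nu> \<le> E_inf \<mu>" using upper[of \<nu>] Em by simp
  qed
next
  assume max: "maximizes_E_inf \<mu>"
  define n where "n = real CARD('n)"
  have n0: "n > 0" unfolding n_def by simp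
  from assms obtain sM: "sets \<mu> = sets borel" and psM: "prob_space \<mu>"
    unfolding P_fin_def by blast
  have "E_inf (uniform_diracs (\<lambda>i::'n. axis i (1::real) :: real^'n)) = (1 - 1 / CARD('n)) / 2"
    by (rule equiv_value[OF ud_Pfin[OF axis_onb] axis_onb meas_equiv_refl])
  then have Ege: "E_inf \<mu> \<ge> (1 - 1 / CARD('n)) / 2"
    using max ud_Pfin[OF axis_onb] unfolding maximizes_E_inf_def by metis
  obtain S where S: "finite S" "S \<subseteq> sphere 0 1"
   and wz0: "\<And>x. x \<notin> S \<Longrightarrow> measure \<mu> {x} = 0"
   and wnn0: "\<And>x. measure \<mu> {x} \<ge> 0"
   and one0: "(\<Sum>x\<in>S. measure \<mu> {x}) = 1"
   and ind: "\<And>B. B \<in> sets borel \<Longrightarrow> measure \<mu> B = (\<Sum>x\<in>S. indicator B x * measure \<mu> {x})"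
   and E: "E_inf \<mu> = 1/2 * (\<Sum>x\<in>S. \<Sum>y\<in>S. Lambda_inf x y * measure \<mu> {x} * measure \<mu> {y})"
    by (rule Pfin_repr[OF assms]) blast
  define w where "w x = measure \<mu> {x}" for x
  have wz: "\<And>x. x \<notin> S \<Longrightarrow> w x = 0" and wnn: "\<And>x. w x \<ge> 0" and one: "(\<Sum>x\<in>S. w x) = 1"
    using wz0 wnn0 one0 unfolding w_def by auto
  define Q where "Q = (\<Sum>x\<in>S. \<Sum>y\<in>S. Lambda_inf x y * w x * w y)"
  have Q1: "Q \<le> 1 - 1/n" using core_bound(1)[OF S wnn one] unfolding Q_def n_def .
  have Q2: "E_inf \<mu> = Q/2" using E unfolding Q_def w_def by simp
  have Q3: "(1-1/n)/2 \<le> E_inf \<mu>" using Ege unfolding n_def .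
  have gen: "Q = a" if "Q \<le> a" "a/2 \<le> E_inf \<mu>" for a using that Q2 by linarith
  have "Q = 1 - 1/n" using gen[OF Q1 Q3] .
  then have Qeq: "(\<Sum>x\<in>S. \<Sum>y\<in>S. Lambda_inf x y * w x * w y) = 1 - 1 / CARD('n)"
    unfolding Q_def n_def .
  note cb2 = core_bound(2)[OF S wnn one Qeq]
  note cb3 = core_bound(3)[OF S wnn one Qeq]
  have unitS: "norm x = 1" if "x \<in> S" for x using that S(2) by auto
  define T where "T = {x\<in>S. w x > 0}"
  have wpos: "w x > 0 \<longleftrightarrow> w x \<noteq> 0" for x using wnn[of x] by auto
  have close: "y = x \<or> y = - x" if "x \<in> T" "y \<in> T" "x \<bullet> y \<noteq> 0" for x y
    using that cb2[of x y] unit_sq[of x y] unitS unfolding T_def by auto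
  have Wy: "w y + w (- y) = 1/n" if yT: "y \<in> T" for y
  proof -
    have yS: "y \<in> S" and ny: "norm y = 1" using yT unitS unfolding T_def by auto
    have yy: "y \<bullet> y = 1" using ny by (simp add: norm_eq_1)
    have "(\<Sum>x\<in>S. (x \<bullet> y)^2 * w x) = w y + w (- y)"
    proof (rule L_pair[OF S(1) wz neg_ne[OF ny]])
      fix x assume x: "x \<in> S" "w x \<noteq> 0" "x \<noteq> y" "x \<noteq> - y"
      show "(x \<bullet> y)^2 = 0"
      proof (rule ccontr)
        assume "(x \<bullet> y)^2 \<noteq> 0"
        then have "x \<bullet> y \<noteq> 0" by simp
        then have "y = x \<or> y = - x" using close[of x y] x yT unfolding T_def by (auto simp: wpos)
        then show False using x by auto
      qed
    qed (auto simp: yy)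
    moreover have "(\<Sum>x\<in>S. (x \<bullet> y)^2 * w x) = 1/n"
      using cb3[of y] yy unfolding n_def by (simp add: mult.commute)
    ultimately show ?thesis by simp
  qed
  define F where "F = {R. R \<subseteq> T \<and> (\<forall>a\<in>R. \<forall>b\<in>R. a \<noteq> b \<longrightarrow> a \<bullet> b = 0)}"
  have finT: "finite T" using S(1) unfolding T_def by simp
  have "finite F" unfolding F_def by (rule finite_subset[of _ "Pow T"]) (use finT in auto)
  moreover have "F \<noteq> {}" unfolding F_def by auto
  ultimately obtain R where RF: "R \<in> F" and Rmax: "\<And>R'. R' \<in> F \<Longrightarrow> R \<subseteq> R' \<Longrightarrow> R = R'"
    using finite_has_maximal[of F] by blast
  have RT: "R \<subseteq> T" and Rorth: "\<And>a b. a \<in> R \<Longrightarrow> b \<in> R \<Longrightarrow> a \<noteq> b \<Longrightarrow> a \<bullet> b = 0"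
    using RF unfolding F_def by auto
  have finR: "finite R" using RT finT finite_subset by blast
  have cover: "x \<in> R \<or> - x \<in> R" if xT: "x \<in> T" for x
  proof (rule ccontr)
    assume nx: "\<not> (x \<in> R \<or> - x \<in> R)"
    have "insert x R \<in> F" unfolding F_def
    proof (intro CollectI conjI)
      show "insert x R \<subseteq> T" using RT xT by auto
      have xr: "x \<bullet> r = 0" if "r \<in> R" for r
      proof (rule ccontr)
        assume "x \<bullet> r \<noteq> 0"
        then have "r = x \<or> r = - x" using close[of x r] xT RT that by auto
        then show False using nx that by auto
      qed
      show "\<forall>a\<in>insert x R. \<forall>b\<in>insert x R. a \<noteq> b \<longrightarrow> a \<bullet> b = 0"
        using Rorth xr by (auto simp: inner_commute)
    qed
    then have "R = insert x R" using Rmax by blast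
    then show False using nx by blast
  qed
  have RS: "R \<subseteq> S" using RT unfolding T_def by auto
  have disj: "R \<inter> uminus ` R = {}"
  proof safe
    fix r r' assume r: "r \<in> R" "r' \<in> R" "- r' \<in> R"
    have nr: "norm r' = 1" using r RS unitS by auto
    show "- r' \<in> {}"
    proof (cases "- r' = r'")
      case True then show ?thesis using neg_ne[OF nr] by simp
    next
      case False
      then have "(- r') \<bullet> r' = 0" using Rorth[OF r(3) r(2)] by blast
      then show ?thesis using nr by (simp add: norm_eq_1)
    qed
  qed
  define U where "U = R \<union> uminus ` R"
  have finU: "finite U" unfolding U_def using finR by simp
  have TU: "T \<subseteq> U" unfolding U_def using cover by force
  have sumSU: "(\<Sum>x\<in>S. g x * w x) = (\<Sum>x\<in>U. g x * w x)" for g :: "real^'n \<Rightarrow> real"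
  proof -
    have "(\<Sum>x\<in>S. g x * w x) = (\<Sum>x\<in>S \<union> U. g x * w x)"
      by (rule sum.mono_neutral_left) (auto simp: S(1) finU wz)
    moreover have "(\<Sum>x\<in>U. g x * w x) = (\<Sum>x\<in>S \<union> U. g x * w x)"
    proof (rule sum.mono_neutral_left)
      show "\<forall>i\<in>S \<union> U - U. g i * w i = 0"
      proof
        fix x assume "x \<in> S \<union> U - U"
        then have "x \<in> S" "x \<notin> T" using TU by auto
        then have "w x = 0" using wnn[of x] unfolding T_def by auto
        then show "g x * w x = 0" by simp
      qed
    qed (auto simp: S(1) finU)
    ultimately show ?thesis by simp
  qed
  have sumU: "(\<Sum>x\<in>U. h x) = (\<Sum>r\<in>R. h r + h (- r))" for h :: "real^'n \<Rightarrow> real"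
  proof -
    have "(\<Sum>x\<in>U. h x) = (\<Sum>x\<in>R. h x) + (\<Sum>x\<in>uminus ` R. h x)"
      unfolding U_def by (rule sum.union_disjoint) (use finR disj in auto)
    also have "(\<Sum>x\<in>uminus ` R. h x) = (\<Sum>r\<in>R. h (- r))"
      by (subst sum.reindex) (auto simp: inj_on_def)
    finally show ?thesis by (simp add: sum.distrib)
  qed
  have WR: "w r + w (- r) = 1/n" if "r \<in> R" for r using Wy RT that by auto
  have "1 = (\<Sum>x\<in>S. 1 * w x)" using one by simp
  also have "\<dots> = (\<Sum>r\<in>R. 1 * w r + 1 * w (- r))" unfolding sumSU sumU ..
  also have "\<dots> = (\<Sum>r\<in>R. 1/n)" using WR by (intro sum.cong refl) simp
  also have "\<dots> = card R / n" by simp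
  finally have "card R = n" using n0 by (simp add: field_simps)
  then have cardR: "card R = CARD('n)" unfolding n_def by linarith
  obtain v :: "'n \<Rightarrow> real^'n" where bij: "bij_betw v UNIV R"
    using finite_same_card_bij[of "UNIV::'n set" R] finR cardR by auto
  have vR: "v i \<in> R" for i using bij bij_betwE by blast
  have vinj: "inj v" using bij bij_betw_imp_inj_on by blast
  have rangev: "range v = R" using bij bij_betw_imp_surj_on by blast
  have onb: "orthonormal_basis_fam v"
    unfolding orthonormal_basis_fam_def
  proof (intro allI)
    fix i j
    show "v i \<bullet> v j = (if i = j then 1 else 0)"
    proof (cases "i = j")
      case True
      have "norm (v i) = 1" using vR RS unitS by auto
      then show ?thesis using True by (simp add: norm_eq_1)
    next
      case False
      then have "v i \<noteq> v j" using vinj by (auto dest: injD)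
      then show ?thesis using Rorth vR False by auto
    qed
  qed
  have eqv: "meas_equiv \<mu> (uniform_diracs v)"
    unfolding meas_equiv_def
  proof (intro exI[of _ "mat 1"] conjI orthogonal_matrix_id ballI impI)
    fix A :: "(real^'n) set"
    define B where "B = A \<union> uminus ` A"
    have symB: "(- x \<in> B) = (x \<in> B)" for x
      unfolding B_def by (auto simp: image_iff) (metis minus_minus)+
    have img: "(\<lambda>x. mat 1 *v x) ` B = B" by simp
    show "emeasure \<mu> (A \<union> uminus ` A) = emeasure (uniform_diracs v) ((\<lambda>x. mat 1 *v x) ` (A \<union> uminus ` A))"
      unfolding B_def[symmetric] img
    proof (cases "B \<in> sets borel")
      case True
      have "measure \<mu> B = (\<Sum>x\<in>S. indicator B x * w x)" using ind[OF True] unfolding w_def .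
      also have "\<dots> = (\<Sum>r\<in>R. indicator B r * w r + indicator B (- r) * w (- r))"
        unfolding sumSU sumU ..
      also have "\<dots> = (\<Sum>r\<in>R. indicator B r * (1/n))"
        using WR by (intro sum.cong refl) (simp add: indicator_def symB distrib_left[symmetric])
      also have "\<dots> = card (R \<inter> B) / n"
      proof -
        have "(\<Sum>r\<in>R. (indicator B r::real)) = real (card (R \<inter> B))"
          using finR by (simp add: indicator_def sum.If_cases Int_def)
        then show ?thesis by (simp add: sum_divide_distrib[symmetric])
      qed
      finally have m1: "measure \<mu> B = card (R \<inter> B) / n" .
      have "v ` (v -` B) = R \<inter> B" using rangev by auto
      then have "card (v -` B) = card (R \<inter> B)"
        using card_image[of v "v -` B"] vinj by (metis inj_on_subset subset_UNIV)
      then have m2: "measure (uniform_diracs v) B = card (R \<inter> B) / n"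
        using ud_measure[OF True, of v] unfolding n_def by simp
      have "emeasure \<mu> B = ennreal (measure \<mu> B)"
        using psM by (simp add: finite_measure.emeasure_eq_measure prob_space.finite_measure)
      moreover have "emeasure (uniform_diracs v) B = ennreal (measure (uniform_diracs v) B)"
        using ud_prob[of v] by (simp add: finite_measure.emeasure_eq_measure prob_space.finite_measure)
      ultimately show "emeasure \<mu> B = emeasure (uniform_diracs v) B" using m1 m2 by simp
    next
      case False
      then show "emeasure \<mu> B = emeasure (uniform_diracs v) B"
        by (simp add: emeasure_notin_sets sM ud_sets)
    qed
  qed
  show "\<exists>v::'n \<Rightarrow> real^'n. orthonormal_basis_fam v \<and> meas_equiv \<mu> (uniform_diracs v)"
    using onb eqv by blast
qed

end
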